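(* Assume $G$ is strongly connected and $r=1$ (neutral drift). Let $C\subseteq V$ and $t\ge 0$. If $P_{i,t|C}=P_{k,t|C}$ for all $i,k\in V$, then $P_{i,t|C}=F_C$ for all $i\in V$.
   Context: Let $G=(V,E)$ be a finite directed graph with $N=|V|$ vertices and a weight matrix $W=[w_{ij}]$ with $w_{ij}\ge 0$, $w_{ij}>0$ iff $(i,j)\in E$, and $\sum_j w_{ij}=1$ for every $i$. A configuration is a subset of $V$ (its elements are mutants, all other vertices residents). In the neutral-drift birth–death (Moran) process on $G$ started from configuration $C$ at time $0$, at each time step a vertex $i$ is selected uniformly at random (probability $1/N$), then a vertex $j$ is chosen with probability $w_{ij}$ and $j$ takes the type of $i$. $P_{i,t|C}$ is the probability that vertex $i$ is a mutant at time $t$; $P_{V,t|C}$ is the probability that all vertices are mutants at time $t$; the fixation probability is $F_C=\lim_{t\to\infty}P_{V,t|C}$. *)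

theory Defs
  imports Complex_Main
begin

definition weight_matrix :: "'v set \<Rightarrow> ('v \<Rightarrow> 'v \<Rightarrow> real) \<Rightarrow> bool" where
  "weight_matrix V W \<longleftrightarrow> finite V \<and> (\<forall>i\<in>V. \<forall>j\<in>V. W i j \<ge> 0)
      \<and> (\<forall>i\<in>V. (\<Sum>j\<in>V. W i j) = 1)"

definition edges :: "'v set \<Rightarrow> ('v \<Rightarrow> 'v \<Rightarrow> real) \<Rightarrow> ('v \<times> 'v) set" where
  "edges V W = {(i,j). i \<in> V \<and> j \<in> V \<and> W i j > 0}"

definition strongly_connected :: "'v set \<Rightarrow> ('v \<Rightarrow> 'v \<Rightarrow> real) \<Rightarrow> bool" where
  "strongly_connected V W \<longleftrightarrow> (\<forall>i\<in>V. \<forall>j\<in>V. (i, j) \<in> (edges V W)\<^sup>*)"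

text \<open>Result of vertex i reproducing onto vertex j: j takes the type of i.\<close>
definition update :: "'v set \<Rightarrow> 'v \<Rightarrow> 'v \<Rightarrow> 'v set" where
  "update A i j = (if i \<in> A then insert j A else A - {j})"

text \<open>One-step transition probability of the neutral (r = 1) birth-death Moran process.\<close>
definition moran_trans :: "'v set \<Rightarrow> ('v \<Rightarrow> 'v \<Rightarrow> real) \<Rightarrow> 'v set \<Rightarrow> 'v set \<Rightarrow> real" where
  "moran_trans V W A B =
     (\<Sum>i\<in>V. \<Sum>j\<in>V. (1 / real (card V)) * W i j * (if update A i j = B then 1 else 0))"

fun moran_dist :: "'v set \<Rightarrow> ('v \<Rightarrow> 'v \<Rightarrow> real) \<Rightarrow> 'v set \<Rightarrow> nat \<Rightarrow> 'v set \<Rightarrow> real" where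
  "moran_dist V W C 0 B = (if B = C then 1 else 0)"
| "moran_dist V W C (Suc t) B = (\<Sum>A\<in>Pow V. moran_dist V W C t A * moran_trans V W A B)"

text \<open>P_{i,t|C}: probability that vertex i is a mutant at time t.\<close>
definition P_vertex :: "'v set \<Rightarrow> ('v \<Rightarrow> 'v \<Rightarrow> real) \<Rightarrow> 'v \<Rightarrow> nat \<Rightarrow> 'v set \<Rightarrow> real" where
  "P_vertex V W i t C = (\<Sum>A\<in>{A\<in>Pow V. i \<in> A}. moran_dist V W C t A)"

definition P_all :: "'v set \<Rightarrow> ('v \<Rightarrow> 'v \<Rightarrow> real) \<Rightarrow> nat \<Rightarrow> 'v set \<Rightarrow> real" where
  "P_all V W t C = moran_dist V W C t V"

definition fixation_prob :: "'v set \<Rightarrow> ('v \<Rightarrow> 'v \<Rightarrow> real) \<Rightarrow> 'v set \<Rightarrow> real" where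
  "fixation_prob V W C = lim (\<lambda>t. P_all V W t C)"

end

theory Submission
  imports Defs
begin

locale moran =
  fixes V :: "'v set" and W :: "'v \<Rightarrow> 'v \<Rightarrow> real"
  assumes wm: "weight_matrix V W" and ne: "V \<noteq> {}"
begin

lemma finV: "finite V" using wm by (simp add: weight_matrix_def)
lemma Npos: "card V > 0" using finV ne by (simp add: card_gt_0_iff)
lemma Wnn: "i \<in> V \<Longrightarrow> j \<in> V \<Longrightarrow> W i j \<ge> 0" using wm by (simp add: weight_matrix_def)
lemma Wsum: "i \<in> V \<Longrightarrow> (\<Sum>j\<in>V. W i j) = 1" using wm by (simp add: weight_matrix_def)

lemma total: "(\<Sum>i\<in>V. \<Sum>j\<in>V. (1 / real (card V)) * W i j) = 1"
proof -
  have "(\<Sum>i\<in>V. \<Sum>j\<in>V. (1 / real (card V)) * W i j) = (\<Sum>i\<in>V. (1 / real (card V)))"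
    by (intro sum.cong refl, subst sum_distrib_left[symmetric]) (simp add: Wsum)
  also have "\<dots> = 1" using Npos by simp
  finally show ?thesis .
qed

lemma update_sub: "A \<subseteq> V \<Longrightarrow> j \<in> V \<Longrightarrow> update A i j \<subseteq> V"
  by (auto simp: update_def)

lemma trans_nn: "moran_trans V W A B \<ge> 0"
  unfolding moran_trans_def by (intro sum_nonneg) (auto simp: Wnn)

lemma trans_out: "A \<subseteq> V \<Longrightarrow> \<not> B \<subseteq> V \<Longrightarrow> moran_trans V W A B = 0"
  unfolding moran_trans_def
  by (intro sum.neutral ballI) (auto dest: update_sub[of A _ _])

lemma trans_sum: "A \<subseteq> V \<Longrightarrow> (\<Sum>B\<in>Pow V. moran_trans V W A B) = 1"
proof -
  assume A: "A \<subseteq> V"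
  have "(\<Sum>B\<in>Pow V. moran_trans V W A B) = (\<Sum>B\<in>Pow V. \<Sum>i\<in>V. \<Sum>j\<in>V.
        (1 / real (card V)) * W i j * (if update A i j = B then 1 else 0))"
    unfolding moran_trans_def by (rule refl)
  also have "\<dots> = (\<Sum>i\<in>V. \<Sum>B\<in>Pow V. \<Sum>j\<in>V.
        (1 / real (card V)) * W i j * (if update A i j = B then 1 else 0))"
    by (rule sum.swap)
  also have "\<dots> = (\<Sum>i\<in>V. \<Sum>j\<in>V. \<Sum>B\<in>Pow V.
        (1 / real (card V)) * W i j * (if update A i j = B then 1 else 0))"
    by (intro sum.cong refl, rule sum.swap)
  also have "\<dots> = (\<Sum>i\<in>V. \<Sum>j\<in>V. (1 / real (card V)) * W i j * (\<Sum>B\<in>Pow V. (if update A i j = B then 1 else 0)))"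
    by (simp only: sum_distrib_left)
  also have "\<dots> = (\<Sum>i\<in>V. \<Sum>j\<in>V. (1 / real (card V)) * W i j)"
    apply (intro sum.cong refl)
    using A update_sub[OF A] finV by (simp add: sum.delta)
  finally show ?thesis using total by simp
qed

lemma dist_nn: "moran_dist V W C n B \<ge> 0"
  by (induction n arbitrary: B) (auto intro!: sum_nonneg mult_nonneg_nonneg trans_nn)

lemma dist_out: "C \<subseteq> V \<Longrightarrow> \<not> B \<subseteq> V \<Longrightarrow> moran_dist V W C n B = 0"
  by (induction n arbitrary: B) (auto intro!: sum.neutral simp: trans_out)

lemma dist_sum: "C \<subseteq> V \<Longrightarrow> (\<Sum>B\<in>Pow V. moran_dist V W C n B) = 1"
proof (induction n)
  case 0
  then show ?case using finV by (simp add: sum.delta)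
next
  case (Suc n)
  have "(\<Sum>B\<in>Pow V. moran_dist V W C (Suc n) B) =
     (\<Sum>A\<in>Pow V. moran_dist V W C n A * (\<Sum>B\<in>Pow V. moran_trans V W A B))"
    apply (simp only: moran_dist.simps(2) sum_distrib_right)
    apply (subst sum.swap)
    by (simp add: sum_distrib_left mult.assoc)
  also have "\<dots> = (\<Sum>A\<in>Pow V. moran_dist V W C n A)"
    by (intro sum.cong refl) (simp add: trans_sum)
  finally show ?case using Suc by simp
qed

lemma CK: "C \<subseteq> V \<Longrightarrow> moran_dist V W C (s + n) B =
   (\<Sum>A\<in>Pow V. moran_dist V W C s A * moran_dist V W A n B)"
proof (induction n arbitrary: B)
  case 0
  show ?case
  proof (cases "B \<subseteq> V")
    case True
    have "(\<Sum>A\<in>Pow V. moran_dist V W C s A * moran_dist V W A 0 B) =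
       (\<Sum>A\<in>Pow V. if A = B then moran_dist V W C s A else 0)"
      by (intro sum.cong) auto
    also have "\<dots> = moran_dist V W C s B" using True finV by (simp add: sum.delta')
    finally show ?thesis by simp
  next
    case False
    then show ?thesis using 0 dist_out[of C B s] by (auto intro!: sum.neutral)
  qed
next
  case (Suc n)
  have "moran_dist V W C (s + Suc n) B =
     (\<Sum>A'\<in>Pow V. (\<Sum>A\<in>Pow V. moran_dist V W C s A * moran_dist V W A n A') * moran_trans V W A' B)"
    using Suc by (simp only: add_Suc_right moran_dist.simps(2))
  also have "\<dots> = (\<Sum>A'\<in>Pow V. \<Sum>A\<in>Pow V. moran_dist V W C s A * moran_dist V W A n A' * moran_trans V W A' B)"
    by (simp add: sum_distrib_right)
  also have "\<dots> = (\<Sum>A\<in>Pow V. \<Sum>A'\<in>Pow V. moran_dist V W C s A * moran_dist V W A n A' * moran_trans V W A' B)"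
    by (rule sum.swap)
  also have "\<dots> = (\<Sum>A\<in>Pow V. moran_dist V W C s A * (\<Sum>A'\<in>Pow V. moran_dist V W A n A' * moran_trans V W A' B))"
    by (simp add: sum_distrib_left mult.assoc)
  finally show ?case by (simp only: moran_dist.simps(2))
qed

lemma dist_one: "A \<subseteq> V \<Longrightarrow> moran_dist V W A 1 B = moran_trans V W A B"
proof -
  assume A: "A \<subseteq> V"
  have "moran_dist V W A 1 B = (\<Sum>A'\<in>Pow V. if A' = A then moran_trans V W A' B else 0)"
    by (simp, intro sum.cong) auto
  also have "\<dots> = moran_trans V W A B" using A finV by (simp add: sum.delta')
  finally show ?thesis .
qed


lemma trans_VV: "moran_trans V W V V = 1"
proof -
  have "moran_trans V W V V = (\<Sum>i\<in>V. \<Sum>j\<in>V. (1 / real (card V)) * W i j)"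
    unfolding moran_trans_def by (intro sum.cong refl) (auto simp: update_def insert_absorb)
  then show ?thesis using total by simp
qed

lemma trans_00: "moran_trans V W {} {} = 1"
proof -
  have "moran_trans V W {} {} = (\<Sum>i\<in>V. \<Sum>j\<in>V. (1 / real (card V)) * W i j)"
    unfolding moran_trans_def by (intro sum.cong refl) (auto simp: update_def)
  then show ?thesis using total by simp
qed

lemma dist_step_ge: "A \<subseteq> V \<Longrightarrow>
   moran_dist V W C n A * moran_trans V W A B \<le> moran_dist V W C (Suc n) B"
proof -
  assume A: "A \<subseteq> V"
  have "moran_dist V W C n A * moran_trans V W A B
      \<le> (\<Sum>A'\<in>Pow V. moran_dist V W C n A' * moran_trans V W A' B)"
    using A finV by (intro member_le_sum) (auto intro!: mult_nonneg_nonneg dist_nn trans_nn)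
  then show ?thesis by simp
qed

lemma dist_abs: "moran_trans V W A A = 1 \<Longrightarrow> A \<subseteq> V \<Longrightarrow> moran_dist V W A n A \<ge> 1"
proof (induction n)
  case 0
  then show ?case by simp
next
  case (Suc n)
  then show ?case using dist_step_ge[of A A n A] by simp
qed

lemma sum_rest: "C \<subseteq> V \<Longrightarrow> S \<subseteq> Pow V \<Longrightarrow>
   (\<Sum>B\<in>S. moran_dist V W C n B) = 1 - (\<Sum>B\<in>Pow V - S. moran_dist V W C n B)"
  using sum.subset_diff[of S "Pow V" "moran_dist V W C n"] dist_sum[of C n] finV by simp

definition trs where "trs = Pow V - {{}, V}"

definition T where "T C s = (\<Sum>B\<in>trs. moran_dist V W C s B)"

lemma trs_sub: "trs \<subseteq> Pow V" by (auto simp: trs_def)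

lemma T_nn: "T C s \<ge> 0" unfolding T_def by (intro sum_nonneg dist_nn)

lemma inner_le1: "A \<subseteq> V \<Longrightarrow> (\<Sum>B\<in>trs. moran_dist V W A n B) \<le> 1"
proof -
  assume A: "A \<subseteq> V"
  have "(\<Sum>B\<in>trs. moran_dist V W A n B) \<le> (\<Sum>B\<in>Pow V. moran_dist V W A n B)"
    using finV trs_sub by (intro sum_mono2) (auto simp: dist_nn)
  then show ?thesis using dist_sum[OF A] by simp
qed

lemma T_le1: "C \<subseteq> V \<Longrightarrow> T C s \<le> 1" unfolding T_def by (rule inner_le1)

lemma inner_abs: "A = {} \<or> A = V \<Longrightarrow> (\<Sum>B\<in>trs. moran_dist V W A n B) \<le> 0"
proof -
  assume A: "A = {} \<or> A = V"
  then have AV: "A \<subseteq> V" by auto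
  have tA: "moran_trans V W A A = 1" using A trans_VV trans_00 by auto
  have "(\<Sum>B\<in>trs. moran_dist V W A n B) = 1 - (\<Sum>B\<in>Pow V - trs. moran_dist V W A n B)"
    using sum_rest[OF AV trs_sub] .
  also have "moran_dist V W A n A \<le> (\<Sum>B\<in>Pow V - trs. moran_dist V W A n B)"
    using A finV by (intro member_le_sum) (auto simp: trs_def dist_nn)
  then have "1 - (\<Sum>B\<in>Pow V - trs. moran_dist V W A n B) \<le> 0"
    using dist_abs[OF tA AV, of n] by linarith
  finally show ?thesis .
qed

lemma decay:
  assumes C: "C \<subseteq> V" and c: "\<forall>A\<in>trs. (\<Sum>B\<in>trs. moran_dist V W A n B) \<le> c"
  shows "T C (s + n) \<le> c * T C s"
proof -
  have "T C (s + n) = (\<Sum>B\<in>trs. \<Sum>A\<in>Pow V. moran_dist V W C s A * moran_dist V W A n B)"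
    unfolding T_def using CK[OF C] by simp
  also have "\<dots> = (\<Sum>A\<in>Pow V. \<Sum>B\<in>trs. moran_dist V W C s A * moran_dist V W A n B)"
    by (rule sum.swap)
  also have "\<dots> = (\<Sum>A\<in>Pow V. moran_dist V W C s A * (\<Sum>B\<in>trs. moran_dist V W A n B))"
    by (simp only: sum_distrib_left)
  also have "\<dots> \<le> (\<Sum>A\<in>Pow V. if A \<in> trs then c * moran_dist V W C s A else 0)"
  proof (rule sum_mono)
    fix A assume A: "A \<in> Pow V"
    show "moran_dist V W C s A * (\<Sum>B\<in>trs. moran_dist V W A n B)
        \<le> (if A \<in> trs then c * moran_dist V W C s A else 0)"
    proof (cases "A \<in> trs")
      case True
      then have "(\<Sum>B\<in>trs. moran_dist V W A n B) \<le> c" using c by blast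
      then have "moran_dist V W C s A * (\<Sum>B\<in>trs. moran_dist V W A n B) \<le> moran_dist V W C s A * c"
        using dist_nn[of C s A] by (rule mult_left_mono)
      then show ?thesis using True by (simp add: mult.commute)
    next
      case False
      then have "A = {} \<or> A = V" using A by (auto simp: trs_def)
      from inner_abs[OF this, of n] dist_nn[of C s A] False show ?thesis
        by (simp add: mult_nonneg_nonpos)
    qed
  qed
  also have "\<dots> = (\<Sum>A\<in>Pow V \<inter> trs. c * moran_dist V W C s A)"
    using finV by (simp add: sum.inter_restrict)
  also have "\<dots> = c * T C s" using trs_sub unfolding T_def
    by (simp add: sum_distrib_left Int_absorb1)
  finally show ?thesis .
qed

lemma T_dec: "C \<subseteq> V \<Longrightarrow> T C (Suc s) \<le> T C s"
proof -
  assume C: "C \<subseteq> V"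
  have "\<forall>A\<in>trs. (\<Sum>B\<in>trs. moran_dist V W A 1 B) \<le> 1"
    using inner_le1 trs_sub by blast
  from decay[OF C this, of s] show ?thesis by simp
qed

lemma exit_edge: "(a, b) \<in> (edges V W)\<^sup>* \<Longrightarrow> a \<in> A \<Longrightarrow> b \<notin> A \<Longrightarrow>
    \<exists>i j. i \<in> A \<and> j \<notin> A \<and> (i, j) \<in> edges V W"
  by (induction rule: rtrancl_induct) blast+

definition d where "d = Min (insert 1 ((\<lambda>(i, j). W i j / real (card V)) ` edges V W))"

lemma edges_fin: "finite (edges V W)"
proof -
  have "edges V W \<subseteq> V \<times> V" by (auto simp: edges_def)
  then show ?thesis using finV finite_subset by blast
qed

lemma d_pos: "d > 0"
  unfolding d_def using edges_fin Npos by (auto simp: edges_def)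

lemma d_le1: "d \<le> 1"
  unfolding d_def using edges_fin by auto

lemma d_le: "(i, j) \<in> edges V W \<Longrightarrow> d \<le> W i j / real (card V)"
  unfolding d_def using edges_fin by (intro Min_le) auto


lemma trans_grow: "A \<subseteq> V \<Longrightarrow> (i, j) \<in> edges V W \<Longrightarrow> i \<in> A \<Longrightarrow>
    d \<le> moran_trans V W A (insert j A)"
proof -
  assume A: "A \<subseteq> V" and e: "(i, j) \<in> edges V W" and iA: "i \<in> A"
  have iV: "i \<in> V" and jV: "j \<in> V" using e by (auto simp: edges_def)
  let ?f = "\<lambda>a b. (1 / real (card V)) * W a b * (if update A a b = insert j A then 1 else 0)"
  have f0: "\<And>a b. a \<in> V \<Longrightarrow> b \<in> V \<Longrightarrow> ?f a b \<ge> 0" using Wnn by auto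
  have "W i j / real (card V) = ?f i j" using iA by (simp add: update_def)
  also have "\<dots> \<le> (\<Sum>b\<in>V. ?f i b)" using jV finV f0 iV by (intro member_le_sum) auto
  also have "\<dots> \<le> (\<Sum>a\<in>V. \<Sum>b\<in>V. ?f a b)" using iV finV f0
    by (intro member_le_sum) (auto intro!: sum_nonneg)
  finally have "W i j / real (card V) \<le> moran_trans V W A (insert j A)"
    unfolding moran_trans_def .
  then show ?thesis using d_le[OF e] by linarith
qed

end

locale moran_sc = moran +
  assumes sc: "strongly_connected V W"
begin

lemma escape: "A \<subseteq> V \<Longrightarrow> A \<noteq> {} \<Longrightarrow> card (V - A) \<le> n \<Longrightarrow> d ^ n \<le> moran_dist V W A n V"
proof (induction n arbitrary: A)
  case 0
  then have "V - A = {}" using finV by simp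
  then have "A = V" using 0 by auto
  then show ?case by simp
next
  case (Suc n)
  show ?case
  proof (cases "A = V")
    case True
    have "d ^ Suc n \<le> d ^ n" using d_pos d_le1 by (simp add: power_decreasing)
    also have "d ^ n \<le> moran_dist V W V n V" using Suc.IH[of V] ne by simp
    also have "\<dots> \<le> moran_dist V W V (Suc n) V" using dist_step_ge[of V V n V] trans_VV by simp
    finally show ?thesis using True by simp
  next
    case False
    obtain a where a: "a \<in> A" using Suc.prems by auto
    obtain b where b: "b \<in> V" "b \<notin> A" using False Suc.prems by auto
    have "(a, b) \<in> (edges V W)\<^sup>*" using sc a b Suc.prems unfolding strongly_connected_def by auto
    from exit_edge[OF this a b(2)] obtain i j where ij: "i \<in> A" "j \<notin> A" "(i, j) \<in> edges V W"
      by blast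
    have jV: "j \<in> V" using ij by (auto simp: edges_def)
    let ?A = "insert j A"
    have AV: "?A \<subseteq> V" using jV Suc.prems by auto
    have "V - ?A = (V - A) - {j}" by auto
    then have "card (V - ?A) = card (V - A) - 1" using jV ij(2) finV by simp
    then have cA: "card (V - ?A) \<le> n" using Suc.prems by simp
    have IH: "d ^ n \<le> moran_dist V W ?A n V" using Suc.IH[OF AV _ cA] by simp
    have "d ^ Suc n = d * d ^ n" by simp
    also have "\<dots> \<le> moran_trans V W A ?A * moran_dist V W ?A n V"
      using trans_grow[OF Suc.prems(1) ij(3) ij(1)] IH d_pos
      by (intro mult_mono) auto
    also have "\<dots> = moran_dist V W A 1 ?A * moran_dist V W ?A n V"
      using dist_one[OF Suc.prems(1)] by simp
    also have "\<dots> \<le> (\<Sum>A'\<in>Pow V. moran_dist V W A 1 A' * moran_dist V W A' n V)"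
      apply (rule member_le_sum)
      using AV apply simp
      apply (rule mult_nonneg_nonneg[OF dist_nn dist_nn])
      using finV by simp
    also have "\<dots> = moran_dist V W A (1 + n) V" by (rule CK[OF Suc.prems(1), symmetric])
    finally show ?thesis unfolding plus_1_eq_Suc .
  qed
qed

abbreviation "N \<equiv> card V"

lemma inner_N: "A \<in> trs \<Longrightarrow> (\<Sum>B\<in>trs. moran_dist V W A N B) \<le> 1 - d ^ N"
proof -
  assume A: "A \<in> trs"
  then have AV: "A \<subseteq> V" and Ane: "A \<noteq> {}" by (auto simp: trs_def)
  have "card (V - A) \<le> N" using finV by (simp add: card_mono)
  then have e: "d ^ N \<le> moran_dist V W A N V" using escape[OF AV Ane] by simp
  have "(\<Sum>B\<in>trs. moran_dist V W A N B) \<le> (\<Sum>B\<in>Pow V - {V}. moran_dist V W A N B)"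
    using finV by (intro sum_mono2) (auto simp: trs_def dist_nn)
  also have "\<dots> = 1 - (\<Sum>B\<in>Pow V - (Pow V - {V}). moran_dist V W A N B)"
    by (rule sum_rest[OF AV]) auto
  also have "Pow V - (Pow V - {V}) = {V}" by auto
  finally show ?thesis using e by simp
qed

lemma T_geom: "C \<subseteq> V \<Longrightarrow> T C (k * N) \<le> (1 - d ^ N) ^ k"
proof (induction k)
  case 0
  then show ?case using T_le1 by simp
next
  case (Suc k)
  have c0: "0 \<le> 1 - d ^ N" using d_pos d_le1 by (simp add: power_le_one)
  have "T C (Suc k * N) = T C (k * N + N)" by (simp add: add.commute)
  also have "\<dots> \<le> (1 - d ^ N) * T C (k * N)"
    using decay[OF Suc.prems, of N "1 - d ^ N"] inner_N by blast
  also have "\<dots> \<le> (1 - d ^ N) * (1 - d ^ N) ^ k"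
    using Suc c0 by (intro mult_left_mono) auto
  finally show ?case by simp
qed

lemma T_lim: "C \<subseteq> V \<Longrightarrow> (\<lambda>s. T C s) \<longlonglongrightarrow> 0"
proof (rule LIMSEQ_I)
  fix r :: real assume r: "0 < r" and C: "C \<subseteq> V"
  have "norm (1 - d ^ N) < 1" using d_pos d_le1 Npos by (simp add: power_le_one)
  from LIMSEQ_D[OF LIMSEQ_power_zero[OF this] r] obtain k where
    k: "\<And>n. n \<ge> k \<Longrightarrow> norm ((1 - d ^ N) ^ n - 0) < r" by blast
  have dec: "decseq (T C)" using T_dec[OF C] by (intro decseq_SucI)
  show "\<exists>no. \<forall>n\<ge>no. norm (T C n - 0) < r"
  proof (intro exI allI impI)
    fix n assume n: "k * N \<le> n"
    have "T C n \<le> T C (k * N)" using decseqD[OF dec n] .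
    also have "\<dots> \<le> (1 - d ^ N) ^ k" using T_geom[OF C] .
    also have "\<dots> < r" using k[of k] by simp
    finally show "norm (T C n - 0) < r" using T_nn[of C n] by simp
  qed
qed


lemma P_mem: "(\<Sum>A\<in>Pow V. moran_dist V W C s A * (if v \<in> A then 1 else 0)) = P_vertex V W v s C"
proof -
  have "(\<Sum>A\<in>Pow V. moran_dist V W C s A * (if v \<in> A then 1 else 0)) =
     (\<Sum>A\<in>Pow V. if v \<in> A then moran_dist V W C s A else 0)"
    by (intro sum.cong refl) auto
  also have "\<dots> = (\<Sum>A\<in>{A\<in>Pow V. v \<in> A}. moran_dist V W C s A)"
    using finV by (intro sum.inter_filter[symmetric]) simp
  finally show ?thesis unfolding P_vertex_def .
qed

lemma inner_marg:
  assumes A: "A \<subseteq> V" and j: "j \<in> V"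
  shows "(\<Sum>B\<in>{B\<in>Pow V. j \<in> B}. moran_trans V W A B) =
    (if j \<in> A then 1 else 0) + (1 / real (card V)) *
      (\<Sum>i\<in>V. W i j * ((if i \<in> A then 1 else 0) - (if j \<in> A then 1 else 0)))"
proof -
  let ?S = "{B\<in>Pow V. j \<in> B}"
  let ?c = "1 / real (card V)"
  let ?x = "\<lambda>v. (if v \<in> A then 1 else 0) :: real"
  have fS: "finite ?S" using finV by simp
  have "(\<Sum>B\<in>?S. moran_trans V W A B) = (\<Sum>B\<in>?S. \<Sum>i\<in>V. \<Sum>k\<in>V.
        ?c * W i k * (if update A i k = B then 1 else 0))"
    unfolding moran_trans_def by (rule refl)
  also have "\<dots> = (\<Sum>i\<in>V. \<Sum>B\<in>?S. \<Sum>k\<in>V.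
        ?c * W i k * (if update A i k = B then 1 else 0))"
    by (rule sum.swap)
  also have "\<dots> = (\<Sum>i\<in>V. \<Sum>k\<in>V. \<Sum>B\<in>?S.
        ?c * W i k * (if update A i k = B then 1 else 0))"
    by (intro sum.cong refl, rule sum.swap)
  also have "\<dots> = (\<Sum>i\<in>V. \<Sum>k\<in>V. ?c * W i k * (if j \<in> update A i k then 1 else 0))"
  proof (intro sum.cong refl)
    fix i k assume i: "i \<in> V" and k: "k \<in> V"
    have u: "update A i k \<subseteq> V" using update_sub[OF A k] .
    have "(\<Sum>B\<in>?S. ?c * W i k * (if update A i k = B then 1 else 0))
        = ?c * W i k * (\<Sum>B\<in>?S. (if update A i k = B then 1 else 0))"
      by (simp only: sum_distrib_left)
    also have "(\<Sum>B\<in>?S. (if update A i k = B then 1 else 0)) = (if update A i k \<in> ?S then 1 else (0::real))"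
      using fS by (simp only: sum.delta')
    finally show "(\<Sum>B\<in>?S. ?c * W i k * (if update A i k = B then 1 else 0))
        = ?c * W i k * (if j \<in> update A i k then 1 else 0)" using u by simp
  qed
  also have "\<dots> = (\<Sum>i\<in>V. \<Sum>k\<in>V. ?c * W i k * ?x j + (if k = j then ?c * W i j * (?x i - ?x j) else 0))"
    by (intro sum.cong refl) (auto simp: update_def)
  also have "\<dots> = (\<Sum>i\<in>V. ?c * ?x j + ?c * W i j * (?x i - ?x j))"
  proof (intro sum.cong refl)
    fix i assume i: "i \<in> V"
    have "(\<Sum>k\<in>V. ?c * W i k * ?x j + (if k = j then ?c * W i j * (?x i - ?x j) else 0))
       = (\<Sum>k\<in>V. ?c * W i k * ?x j) + (\<Sum>k\<in>V. (if k = j then ?c * W i j * (?x i - ?x j) else 0))"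
      by (rule sum.distrib)
    also have "(\<Sum>k\<in>V. ?c * W i k * ?x j) = ?c * ?x j * (\<Sum>k\<in>V. W i k)"
      by (subst sum_distrib_left) (simp add: mult_ac)
    also have "(\<Sum>k\<in>V. (if k = j then ?c * W i j * (?x i - ?x j) else 0)) = ?c * W i j * (?x i - ?x j)"
      using finV j by (simp add: sum.delta')
    finally show "(\<Sum>k\<in>V. ?c * W i k * ?x j + (if k = j then ?c * W i j * (?x i - ?x j) else 0))
       = ?c * ?x j + ?c * W i j * (?x i - ?x j)" using Wsum[OF i] by simp
  qed
  also have "\<dots> = (\<Sum>i\<in>V. ?c * ?x j) + (\<Sum>i\<in>V. ?c * W i j * (?x i - ?x j))"
    by (rule sum.distrib)
  also have "(\<Sum>i\<in>V. ?c * ?x j) = ?x j" using Npos by simp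
  also have "(\<Sum>i\<in>V. ?c * W i j * (?x i - ?x j)) = ?c * (\<Sum>i\<in>V. W i j * (?x i - ?x j))"
    by (simp add: sum_distrib_left mult_ac)
  finally show ?thesis .
qed

lemma marg:
  assumes j: "j \<in> V"
  shows "P_vertex V W j (Suc s) C = P_vertex V W j s C + (1 / real (card V)) *
      (\<Sum>i\<in>V. W i j * (P_vertex V W i s C - P_vertex V W j s C))"
proof -
  let ?S = "{B\<in>Pow V. j \<in> B}"
  let ?c = "1 / real (card V)"
  let ?x = "\<lambda>v A. (if v \<in> A then 1 else 0) :: real"
  let ?D = "moran_dist V W C s"
  have "P_vertex V W j (Suc s) C = (\<Sum>B\<in>?S. \<Sum>A\<in>Pow V. ?D A * moran_trans V W A B)"
    unfolding P_vertex_def by simp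
  also have "\<dots> = (\<Sum>A\<in>Pow V. \<Sum>B\<in>?S. ?D A * moran_trans V W A B)"
    by (rule sum.swap)
  also have "\<dots> = (\<Sum>A\<in>Pow V. ?D A * (\<Sum>B\<in>?S. moran_trans V W A B))"
    by (simp only: sum_distrib_left)
  also have "\<dots> = (\<Sum>A\<in>Pow V. ?D A * ?x j A + ?c * (\<Sum>i\<in>V. W i j * (?D A * ?x i A - ?D A * ?x j A)))"
  proof (intro sum.cong refl)
    fix A assume "A \<in> Pow V"
    then have e: "(\<Sum>B\<in>?S. moran_trans V W A B) = ?x j A + ?c * (\<Sum>i\<in>V. W i j * (?x i A - ?x j A))"
      by (intro inner_marg j) auto
    have e2: "(\<Sum>i\<in>V. W i j * (?D A * ?x i A - ?D A * ?x j A)) = ?D A * (\<Sum>i\<in>V. W i j * (?x i A - ?x j A))"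
      by (subst sum_distrib_left) (intro sum.cong refl, simp add: algebra_simps)
    show "?D A * (\<Sum>B\<in>?S. moran_trans V W A B) = ?D A * ?x j A + ?c * (\<Sum>i\<in>V. W i j * (?D A * ?x i A - ?D A * ?x j A))"
      unfolding e e2 by (simp add: algebra_simps)
  qed
  also have "\<dots> = (\<Sum>A\<in>Pow V. ?D A * ?x j A) + ?c * (\<Sum>A\<in>Pow V. \<Sum>i\<in>V. W i j * (?D A * ?x i A - ?D A * ?x j A))"
    by (simp only: sum.distrib sum_distrib_left)
  also have "(\<Sum>A\<in>Pow V. \<Sum>i\<in>V. W i j * (?D A * ?x i A - ?D A * ?x j A))
      = (\<Sum>i\<in>V. \<Sum>A\<in>Pow V. W i j * (?D A * ?x i A - ?D A * ?x j A))"
    by (rule sum.swap)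
  also have "\<dots> = (\<Sum>i\<in>V. W i j * ((\<Sum>A\<in>Pow V. ?D A * ?x i A) - (\<Sum>A\<in>Pow V. ?D A * ?x j A)))"
    by (simp only: sum_distrib_left[symmetric] sum_subtractf)
  finally show ?thesis by (simp only: P_mem)
qed

lemma P_split:
  assumes C: "C \<subseteq> V" and i: "i \<in> V"
  shows "P_all V W s C \<le> P_vertex V W i s C \<and> P_vertex V W i s C \<le> P_all V W s C + T C s"
proof -
  let ?S = "{B\<in>Pow V. i \<in> B}"
  have sub: "{V} \<subseteq> ?S" using i by auto
  have "P_vertex V W i s C = (\<Sum>B\<in>?S - {V}. moran_dist V W C s B) + P_all V W s C"
    unfolding P_vertex_def P_all_def using sum.subset_diff[OF sub] finV by simp
  moreover have "0 \<le> (\<Sum>B\<in>?S - {V}. moran_dist V W C s B)" by (intro sum_nonneg dist_nn)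
  moreover have "(\<Sum>B\<in>?S - {V}. moran_dist V W C s B) \<le> T C s"
    unfolding T_def using finV by (intro sum_mono2) (auto simp: trs_def dist_nn)
  ultimately show ?thesis by linarith
qed


end

theorem theorem3:
  fixes V :: "'v set" and W :: "'v \<Rightarrow> 'v \<Rightarrow> real" and C :: "'v set" and t :: nat
  assumes "weight_matrix V W"
    and "strongly_connected V W"
    and "C \<subseteq> V"
    and "\<forall>i\<in>V. \<forall>k\<in>V. P_vertex V W i t C = P_vertex V W k t C"
  shows "\<forall>i\<in>V. P_vertex V W i t C = fixation_prob V W C"
proof
  fix i assume i: "i \<in> V"
  then have ne: "V \<noteq> {}" by auto
  have m: "moran V W" by (rule moran.intro[OF assms(1) ne])
  have msc: "moran_sc V W" by (rule moran_sc.intro[OF m moran_sc_axioms.intro[OF assms(2)]])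
  define p where "p = P_vertex V W i t C"
  have all: "\<forall>k\<in>V. P_vertex V W k (t + m) C = p" for m
  proof (induction m)
    case 0
    show ?case
    proof
      fix k assume k: "k \<in> V"
      with assms(4) i have "P_vertex V W k t C = P_vertex V W i t C" by blast
      then show "P_vertex V W k (t + 0) C = p" by (simp add: p_def)
    qed
  next
    case (Suc m)
    show ?case
    proof
      fix k assume k: "k \<in> V"
      have "P_vertex V W k (Suc (t + m)) C = P_vertex V W k (t + m) C + (1 / real (card V)) *
        (\<Sum>j\<in>V. W j k * (P_vertex V W j (t + m) C - P_vertex V W k (t + m) C))"
        by (rule moran_sc.marg[OF msc k])
      also have "\<dots> = p"
      proof -
        have z: "(\<Sum>j\<in>V. W j k * (P_vertex V W j (t + m) C - P_vertex V W k (t + m) C)) = 0"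
          using Suc k by (intro sum.neutral) auto
        show ?thesis unfolding z using Suc k by auto
      qed
      finally show "P_vertex V W k (t + Suc m) C = p" by simp
    qed
  qed
  have ev: "eventually (\<lambda>s. P_vertex V W i s C = p) sequentially"
  proof (rule eventually_sequentiallyI[of t])
    fix s assume "t \<le> s"
    then obtain m where "s = t + m" using le_Suc_ex by blast
    then show "P_vertex V W i s C = p" using all i by simp
  qed
  have g: "(\<lambda>s. P_vertex V W i s C) \<longlonglongrightarrow> p"
    using tendsto_cong[OF ev] by simp
  have f: "(\<lambda>s. P_vertex V W i s C - moran.T V W C s) \<longlonglongrightarrow> p - 0"
    by (intro tendsto_diff g moran_sc.T_lim[OF msc assms(3)])
  have lim: "(\<lambda>s. P_all V W s C) \<longlonglongrightarrow> p"
  proof (rule tendsto_sandwich[OF _ _ _ g])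
    show "(\<lambda>s. P_vertex V W i s C - moran.T V W C s) \<longlonglongrightarrow> p" using f by simp
    show "\<forall>\<^sub>F s in sequentially. P_vertex V W i s C - moran.T V W C s \<le> P_all V W s C"
      using moran_sc.P_split[OF msc assms(3) i] by (intro always_eventually) (auto simp: algebra_simps)
    show "\<forall>\<^sub>F s in sequentially. P_all V W s C \<le> P_vertex V W i s C"
      using moran_sc.P_split[OF msc assms(3) i] by (intro always_eventually) auto
  qed
  show "P_vertex V W i t C = fixation_prob V W C"
    unfolding fixation_prob_def using limI[OF lim] by (simp add: p_def)
qed

end
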